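(* Let $\mathcal P\subseteq 2^{[n]}$ be a nonempty intersection-closed family. Then $\beta_{1,m}(I^\star_{\mathtt C(\mathcal P)})\neq0$ if and only if $m=m(A,B)$ for some $A,B\in\mathcal P$ with $B$ covering $A$ (i.e. $A<B$ and no $C\in\mathcal P$ satisfies $A<C<B$), in which case it equals $1$. Consequently the minimal generators of the first syzygy module of $I^\star_{\mathtt C(\mathcal P)}$ are in bijection with the cover relations of $\mathcal P$.
   Context: For $n\in\mathbb N$ let $[n]=\{0,\dots,n-1\}$. Fix a field $\Bbbk$, $S=\Bbbk[x_{(i,b)}: i\in[n], b\in\{0,1\}]$ multigraded by monomials; $\beta_{i,m}(M)=\dim_\Bbbk\operatorname{Tor}_i^S(M,\Bbbk)_m$. For $\mathcal P\subseteq 2^{[n]}$ ordered by inclusion, $\mathtt C(\mathcal P)=\{\mathbf 1_A:A\in\mathcal P\}$; intersection-closed means $A,B\in\mathcal P\Rightarrow A\cap B\in\mathcal P$. $I^\star_{\mathtt C}=\langle\prod_{i\in[n]}x_{(i,1-f(i))}: f\in\mathtt C\rangle$. For $A\subseteq B\subseteq[n]$, $m(A,B):=\prod_{i\in A}x_{(i,0)}\prod_{i\notin B}x_{(i,1)}\prod_{i\in B\setminus A}x_{(i,0)}x_{(i,1)}$. *)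

theory Defs
  imports Main HOL.Vector_Spaces "HOL-Library.Function_Algebras"
begin

text \<open>Variables of S are x_(i,b) with i < n, b < 2.  A monomial of S is identified
with its exponent vector (nat \<times> nat \<Rightarrow> nat), vanishing outside vars n.\<close>

definition vars :: "nat \<Rightarrow> (nat \<times> nat) set" where
  "vars n = {0..<n} \<times> {0..<2}"

definition is_monomial :: "nat \<Rightarrow> (nat \<times> nat \<Rightarrow> nat) \<Rightarrow> bool" where
  "is_monomial n u \<longleftrightarrow> (\<forall>v. v \<notin> vars n \<longrightarrow> u v = 0)"

definition ind :: "nat set \<Rightarrow> nat \<Rightarrow> nat" where
  "ind A = (\<lambda>i. if i \<in> A then 1 else 0)"

definition Cfam :: "nat set set \<Rightarrow> (nat \<Rightarrow> nat) set" where
  "Cfam P = ind ` P"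

definition intersection_closed :: "nat set set \<Rightarrow> bool" where
  "intersection_closed P \<longleftrightarrow> (\<forall>A\<in>P. \<forall>B\<in>P. A \<inter> B \<in> P)"

definition gen_mon :: "nat \<Rightarrow> (nat \<Rightarrow> nat) \<Rightarrow> (nat \<times> nat \<Rightarrow> nat)" where
  "gen_mon n f = (\<lambda>(i,b). if i < n \<and> b = 1 - f i then 1 else 0)"

definition Istar_gens :: "nat \<Rightarrow> (nat \<Rightarrow> nat) set \<Rightarrow> (nat \<times> nat \<Rightarrow> nat) set" where
  "Istar_gens n C = gen_mon n ` C"

definition mAB :: "nat \<Rightarrow> nat set \<Rightarrow> nat set \<Rightarrow> (nat \<times> nat \<Rightarrow> nat)" where
  "mAB n A B = (\<lambda>(i,b). if i < n \<and> b < 2 then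
      (if i \<in> A then (if b = 0 then 1 else 0)
       else if i \<notin> B then (if b = 1 then 1 else 0)
       else 1) else 0)"

definition covers :: "nat set set \<Rightarrow> nat set \<Rightarrow> nat set \<Rightarrow> bool" where
  "covers P A B \<longleftrightarrow> A \<subset> B \<and> \<not> (\<exists>C\<in>P. A \<subset> C \<and> C \<subset> B)"

text \<open>Multigraded first Betti number beta_{1,u}(I) = dim_k Tor_1^S(I,k)_u of a monomial
ideal I generated by a finite set G of monomials, computed from the minimal free
presentation  0 -> K -> F -> I -> 0, F = (+)_{g minimal generator} S(-g):
Tor_1(I,k) = K / m K.  In multidegree u, F_u has basis x^(u-g) e_g for the minimal
generators g dividing u; an element is a coefficient function c, and it lies in K_u
iff sum of c g = 0.  (m K)_u = sum over variables v with x_v | u of x_v K_(u - e_v),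
and multiplication by x_v keeps the coefficient function unchanged.\<close>

definition divides_mon :: "('v \<Rightarrow> nat) \<Rightarrow> ('v \<Rightarrow> nat) \<Rightarrow> bool" where
  "divides_mon g u \<longleftrightarrow> (\<forall>v. g v \<le> u v)"

definition min_gens :: "('v \<Rightarrow> nat) set \<Rightarrow> ('v \<Rightarrow> nat) set" where
  "min_gens G = {g \<in> G. \<forall>h\<in>G. divides_mon h g \<longrightarrow> h = g}"

definition syz_deg :: "'k::field itself \<Rightarrow> ('v \<Rightarrow> nat) set \<Rightarrow> ('v \<Rightarrow> nat)
    \<Rightarrow> (('v \<Rightarrow> nat) \<Rightarrow> 'k) set" where
  "syz_deg _ G u = {c. (\<forall>g. c g \<noteq> 0 \<longrightarrow> g \<in> min_gens G \<and> divides_mon g u)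
                       \<and> (\<Sum>g\<in>min_gens G. c g) = 0}"

definition fscale :: "'k::field \<Rightarrow> ('a \<Rightarrow> 'k) \<Rightarrow> ('a \<Rightarrow> 'k)" where
  "fscale a f = (\<lambda>x. a * f x)"

definition max_syz_deg :: "'k::field itself \<Rightarrow> ('v \<Rightarrow> nat) set \<Rightarrow> ('v \<Rightarrow> nat)
    \<Rightarrow> (('v \<Rightarrow> nat) \<Rightarrow> 'k) set" where
  "max_syz_deg K G u = module.span fscale
      (\<Union>v\<in>{v. u v > 0}. syz_deg K G (u(v := u v - 1)))"

definition betti1 :: "'k::field itself \<Rightarrow> ('v \<Rightarrow> nat) set \<Rightarrow> ('v \<Rightarrow> nat) \<Rightarrow> nat" where
  "betti1 K G u = vector_space.dim (fscale :: 'k \<Rightarrow> _) (syz_deg K G u)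
                 - vector_space.dim (fscale :: 'k \<Rightarrow> _) (max_syz_deg K G u)"

end

theory Submission
  imports Defs
begin


lemma vs_fscale: "vector_space (fscale :: 'k::field \<Rightarrow> ('a \<Rightarrow> 'k) \<Rightarrow> ('a \<Rightarrow> 'k))"
  by unfold_locales (auto simp: fscale_def fun_eq_iff algebra_simps)

lemma sum_fun_apply: "(sum f A) x = (\<Sum>a\<in>A. f a x)"
proof (cases "finite A")
  case True then show ?thesis by (induction A rule: finite_induct) auto
qed auto

definition Rel :: "('v\<Rightarrow>nat) \<Rightarrow> ('v\<Rightarrow>nat) \<Rightarrow> ('v\<Rightarrow>nat) \<Rightarrow> bool" where
  "Rel u g h \<longleftrightarrow> (\<exists>v. u v > 0 \<and> divides_mon g (u(v:=u v - 1)) \<and> divides_mon h (u(v:=u v - 1)))"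

definition dl :: "('v\<Rightarrow>nat) \<Rightarrow> ('v\<Rightarrow>nat) \<Rightarrow> 'k::field" where
  "dl g = (\<lambda>x. if x = g then 1 else 0)"

lemma syz_subspace: "module.subspace (fscale :: 'k::field \<Rightarrow> _) (syz_deg TYPE('k) G u)"
proof -
  interpret V: vector_space "fscale :: 'k \<Rightarrow> (('v\<Rightarrow>nat) \<Rightarrow> 'k) \<Rightarrow> _" by (rule vs_fscale)
  show ?thesis
    unfolding V.subspace_def syz_deg_def
    by (auto simp: fscale_def sum.distrib sum_distrib_left[symmetric]) (metis add.right_neutral)+
qed

lemma divides_dec: "divides_mon g (u(v:=u v - 1)) \<Longrightarrow> divides_mon g u"
  unfolding divides_mon_def by (metis diff_le_self fun_upd_apply le_trans)

lemma syz_mono: "syz_deg K G (u(v:=u v - 1)) \<subseteq> syz_deg K G u"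
  unfolding syz_deg_def using divides_dec by fastforce

lemma max_sub: "max_syz_deg TYPE('k::field) G u \<subseteq> syz_deg TYPE('k) G u"
proof -
  interpret V: vector_space "fscale :: 'k \<Rightarrow> (('v\<Rightarrow>nat) \<Rightarrow> 'k) \<Rightarrow> _" by (rule vs_fscale)
  show ?thesis unfolding max_syz_deg_def
    by (rule V.span_minimal[OF _ syz_subspace]) (use syz_mono[of "TYPE('k)" G u] in blast)
qed

lemma dl_diff_in:
  assumes "g \<in> min_gens G" "h \<in> min_gens G" "Rel u g h" "finite (min_gens G)"
  shows "(dl g - dl h :: _ \<Rightarrow> 'k::field) \<in> (\<Union>v\<in>{v. u v > 0}. syz_deg TYPE('k) G (u(v := u v - 1)))"
proof -
  from assms(3) obtain v where v: "u v > 0" "divides_mon g (u(v:=u v - 1))" "divides_mon h (u(v:=u v - 1))"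
    unfolding Rel_def by blast
  have "(\<Sum>x\<in>min_gens G. (dl g - dl h) x) = (0::'k)"
    using assms(1,2,4) by (simp add: dl_def sum.distrib sum_subtractf)
  then have "(dl g - dl h :: _ \<Rightarrow> 'k) \<in> syz_deg TYPE('k) G (u(v := u v - 1))"
    unfolding syz_deg_def using v assms(1,2) by (auto simp: dl_def split: if_splits)
  with v show ?thesis by blast
qed

lemma hub:
  assumes fin: "finite (min_gens G)"
    and H: "{g\<in>min_gens G. divides_mon g u} = {} \<or>
       (\<exists>g0\<in>{g\<in>min_gens G. divides_mon g u}. \<forall>h\<in>{g\<in>min_gens G. divides_mon g u}.
           h = g0 \<or> Rel u g0 h \<or> (\<exists>h'\<in>{g\<in>min_gens G. divides_mon g u}. Rel u g0 h' \<and> Rel u h' h))"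
  shows "syz_deg TYPE('k::field) G u \<subseteq> max_syz_deg TYPE('k) G u"
proof
  interpret V: vector_space "fscale :: 'k \<Rightarrow> (('v\<Rightarrow>nat) \<Rightarrow> 'k) \<Rightarrow> _" by (rule vs_fscale)
  fix c :: "_ \<Rightarrow> 'k" assume c: "c \<in> syz_deg TYPE('k) G u"
  let ?Gu = "{g\<in>min_gens G. divides_mon g u}"
  let ?U = "(\<Union>v\<in>{v. u v > 0}. syz_deg TYPE('k) G (u(v := u v - 1)))"
  have csup: "c x \<noteq> 0 \<Longrightarrow> x \<in> ?Gu" for x using c unfolding syz_deg_def by blast
  have sumM: "(\<Sum>g\<in>min_gens G. c g) = 0" using c unfolding syz_deg_def by blast
  have sumGu: "(\<Sum>g\<in>?Gu. c g) = 0"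
  proof -
    have "(\<Sum>g\<in>?Gu. c g) = (\<Sum>g\<in>min_gens G. c g)"
      by (rule sum.mono_neutral_left) (use fin csup in auto)
    with sumM show ?thesis by simp
  qed
  show "c \<in> max_syz_deg TYPE('k) G u"
  proof (cases "?Gu = {}")
    case True
    then have "c = 0" using csup by (auto simp: fun_eq_iff)
    then show ?thesis unfolding max_syz_deg_def using V.span_zero by simp
  next
    case False
    with H obtain g0 where g0: "g0 \<in> ?Gu" and hh: "\<forall>h\<in>?Gu.
           h = g0 \<or> Rel u g0 h \<or> (\<exists>h'\<in>?Gu. Rel u g0 h' \<and> Rel u h' h)" by blast
    have Rsym: "Rel u a b \<Longrightarrow> Rel u b a" for a b unfolding Rel_def by blast
    have inU: "a \<in> min_gens G \<Longrightarrow> b \<in> min_gens G \<Longrightarrow> Rel u a b \<Longrightarrow> (dl a - dl b :: _ \<Rightarrow> 'k) \<in> V.span ?U" for a b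
      using dl_diff_in[OF _ _ _ fin] V.span_base by blast
    have each: "(dl h - dl g0 :: _ \<Rightarrow> 'k) \<in> V.span ?U" if h: "h \<in> ?Gu" for h
    proof -
      from hh h consider "h = g0" | "Rel u g0 h" | h' where "h' \<in> ?Gu" "Rel u g0 h'" "Rel u h' h" by blast
      then show ?thesis
      proof cases
        case 1 then show ?thesis using V.span_zero by simp
      next
        case 2 then show ?thesis using inU g0 h Rsym by blast
      next
        case 3
        have "(dl h - dl h' :: _ \<Rightarrow> 'k) + (dl h' - dl g0) \<in> V.span ?U"
          using 3 inU g0 h Rsym V.span_add by blast
        then show ?thesis by simp
      qed
    qed
    have eq: "c = (\<Sum>h\<in>?Gu. fscale (c h) (dl h - dl g0))"
    proof
      fix x
      have fG: "finite ?Gu" using fin by simp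
      have "(\<Sum>h\<in>?Gu. fscale (c h) (dl h - dl g0)) x = (\<Sum>h\<in>?Gu. c h * dl h x) - (\<Sum>h\<in>?Gu. c h) * dl g0 x"
        by (simp add: sum_fun_apply fscale_def right_diff_distrib sum_subtractf sum_distrib_right)
      also have "(\<Sum>h\<in>?Gu. c h * dl h x) = (if x \<in> ?Gu then c x else 0)"
        using fG by (simp add: dl_def if_distrib cong: if_cong)
      finally have e1: "(\<Sum>h\<in>?Gu. fscale (c h) (dl h - dl g0)) x = (if x \<in> ?Gu then c x else 0)"
        using sumGu by (simp only: mult_zero_left diff_zero)
      have "c x = (if x \<in> ?Gu then c x else 0)" using csup by auto
      then show "c x = (\<Sum>h\<in>?Gu. fscale (c h) (dl h - dl g0)) x"
        using e1 by argo
    qed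
    have "(\<Sum>h\<in>?Gu. fscale (c h) (dl h - dl g0)) \<in> V.span ?U"
      by (rule V.span_sum) (use each V.span_scale in auto)
    then show ?thesis using eq unfolding max_syz_deg_def by simp
  qed
qed

lemma betti_zero:
  assumes "syz_deg TYPE('k::field) G u \<subseteq> max_syz_deg TYPE('k) G u"
  shows "betti1 TYPE('k) G u = 0"
  using assms max_sub[of G u] unfolding betti1_def by (metis diff_self_eq_0 subset_antisym)

lemma betti_one:
  fixes G :: "('v \<Rightarrow> nat) set"
  assumes fin: "finite (min_gens G)"
    and Gu: "{g\<in>min_gens G. divides_mon g u} = {g1, g2}" and ne: "g1 \<noteq> g2"
    and nR: "\<not> Rel u g1 g2"
  shows "betti1 TYPE('k::field) G u = 1"
proof -
  interpret V: vector_space "fscale :: 'k \<Rightarrow> (('v\<Rightarrow>nat) \<Rightarrow> 'k) \<Rightarrow> _" by (rule vs_fscale)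
  let ?Gu = "{g\<in>min_gens G. divides_mon g u}"
  let ?U = "(\<Union>v\<in>{v. u v > 0}. syz_deg TYPE('k) G (u(v := u v - 1)))"
  have g12: "g1 \<in> min_gens G" "divides_mon g1 u" "g2 \<in> min_gens G" "divides_mon g2 u"
    using Gu by blast+
  have U0: "?U \<subseteq> {0}"
  proof
    fix c assume "c \<in> ?U"
    then obtain v where v: "u v > 0" and c: "c \<in> syz_deg TYPE('k) G (u(v := u v - 1))" by blast
    have sup: "c x \<noteq> 0 \<Longrightarrow> x \<in> min_gens G \<and> divides_mon x (u(v := u v - 1))" for x
      using c unfolding syz_deg_def by blast
    have sm: "(\<Sum>g\<in>min_gens G. c g) = 0" using c unfolding syz_deg_def by blast
    have "c x = 0" for x
    proof (rule ccontr)
      assume cx: "c x \<noteq> 0"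
      have x: "x \<in> min_gens G" "divides_mon x (u(v := u v - 1))" using sup[OF cx] by auto
      have other: "z = x" if "c z \<noteq> 0" for z
      proof -
        have z: "z \<in> min_gens G" "divides_mon z (u(v := u v - 1))" using sup[OF that] by auto
        have "x \<in> {g1,g2}" unfolding Gu[symmetric] using x(1) divides_dec[OF x(2)] by simp
        moreover have "z \<in> {g1,g2}" unfolding Gu[symmetric] using z(1) divides_dec[OF z(2)] by simp
        moreover have "\<not> Rel u x z" if "x \<noteq> z"
        proof -
          have "Rel u g1 g2 \<or> Rel u g2 g1" if "Rel u x z"
            using that \<open>x \<in> {g1,g2}\<close> \<open>z \<in> {g1,g2}\<close> \<open>x \<noteq> z\<close> by auto
          moreover have "Rel u g2 g1 \<Longrightarrow> Rel u g1 g2" unfolding Rel_def by blast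
          ultimately show ?thesis using nR by blast
        qed
        moreover have "Rel u x z" using v x z unfolding Rel_def by blast
        ultimately show ?thesis by blast
      qed
      have "(\<Sum>g\<in>min_gens G. c g) = (\<Sum>g\<in>{x}. c g)"
        by (rule sum.mono_neutral_right) (use fin x other in auto)
      with sm cx show False by simp
    qed
    then show "c \<in> {0}" by (auto simp: fun_eq_iff)
  qed
  have dmax: "V.dim (max_syz_deg TYPE('k) G u) = 0"
  proof -
    have "V.dim ?U \<le> card ({} :: (('v\<Rightarrow>nat) \<Rightarrow> 'k) set)"
      using V.dim_le_card[of ?U "{}"] U0 by auto
    then show ?thesis unfolding max_syz_deg_def by simp
  qed
  define w :: "('v\<Rightarrow>nat) \<Rightarrow> 'k" where "w = dl g1 - dl g2"
  have w_in: "w \<in> syz_deg TYPE('k) G u"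
  proof -
    have "(\<Sum>x\<in>min_gens G. w x) = 0"
      using g12 fin by (simp add: w_def dl_def sum.distrib sum_subtractf)
    then show ?thesis unfolding syz_deg_def using g12 by (auto simp: w_def dl_def split: if_splits)
  qed
  have w0: "w \<noteq> 0" using ne by (auto simp: w_def dl_def fun_eq_iff)
  have syz_eq: "syz_deg TYPE('k) G u = V.span {w}"
  proof
    show "V.span {w} \<subseteq> syz_deg TYPE('k) G u"
      by (rule V.span_minimal[OF _ syz_subspace]) (use w_in in blast)
    show "syz_deg TYPE('k) G u \<subseteq> V.span {w}"
    proof
      fix c :: "_ \<Rightarrow> 'k" assume c: "c \<in> syz_deg TYPE('k) G u"
      have sup: "c x \<noteq> 0 \<Longrightarrow> x \<in> {g1,g2}" for x
        unfolding Gu[symmetric] using c unfolding syz_deg_def by blast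
      have sm: "(\<Sum>g\<in>min_gens G. c g) = 0" using c unfolding syz_deg_def by blast
      have "(\<Sum>g\<in>min_gens G. c g) = (\<Sum>g\<in>{g1,g2}. c g)"
        by (rule sum.mono_neutral_right) (use fin g12 sup in auto)
      with sm ne have c2: "c g2 = - c g1" by (simp add: eq_neg_iff_add_eq_0 add.commute)
      have "c = fscale (c g1) w"
      proof
        fix x show "c x = fscale (c g1) w x"
          using sup[of x] c2 ne by (auto simp: fscale_def w_def dl_def)
      qed
      moreover have "w \<in> V.span {w}" by (rule V.span_base) simp
      then have "fscale (c g1) w \<in> V.span {w}" by (rule V.span_scale)
      ultimately show "c \<in> V.span {w}" by simp
    qed
  qed
  have "V.independent {w}"
    using w0 V.independent_insertI[of w "{}"] by auto
  then have "V.dim (V.span {w}) = card {w}" by (rule V.dim_span_eq_card_independent)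
  then have "V.dim (syz_deg TYPE('k) G u) = 1"
    unfolding syz_eq by simp
  then show ?thesis unfolding betti1_def using dmax by simp
qed



abbreviation gm :: "nat \<Rightarrow> nat set \<Rightarrow> (nat \<times> nat \<Rightarrow> nat)" where
  "gm n A \<equiv> gen_mon n (ind A)"

lemma gm_apply: "gm n A (i,b) = (if i<n \<and> ((i\<in>A \<and> b=0) \<or> (i\<notin>A \<and> b=1)) then 1 else 0)"
  unfolding gen_mon_def ind_def by auto

lemma gm_le1: "gm n A v \<le> 1"
  by (cases v) (simp add: gm_apply)

lemma mAB_apply: "mAB n A B (i,b) = (if i<n \<and> ((b=0 \<and> (i\<in>A \<or> i\<in>B)) \<or> (b=1 \<and> i\<notin>A)) then 1 else 0)"
  unfolding mAB_def by auto

lemma div_gm: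
  "divides_mon (gm n A) u \<longleftrightarrow> (\<forall>i<n. (i\<in>A \<longrightarrow> u(i,0) \<ge> 1) \<and> (i\<notin>A \<longrightarrow> u(i,1) \<ge> 1))"
proof
  assume "divides_mon (gm n A) u"
  then have d: "gm n A v \<le> u v" for v unfolding divides_mon_def by blast
  show "\<forall>i<n. (i\<in>A \<longrightarrow> u(i,0) \<ge> 1) \<and> (i\<notin>A \<longrightarrow> u(i,1) \<ge> 1)"
  proof (intro allI impI conjI)
    fix i assume "i < n"
    show "i \<in> A \<Longrightarrow> u(i,0) \<ge> 1" using d[of "(i,0)"] \<open>i<n\<close> by (simp add: gm_apply)
    show "i \<notin> A \<Longrightarrow> u(i,1) \<ge> 1" using d[of "(i,1)"] \<open>i<n\<close> by (simp add: gm_apply)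
  qed
next
  assume H: "\<forall>i<n. (i\<in>A \<longrightarrow> u(i,0) \<ge> 1) \<and> (i\<notin>A \<longrightarrow> u(i,1) \<ge> 1)"
  show "divides_mon (gm n A) u" unfolding divides_mon_def
  proof
    fix v show "gm n A v \<le> u v"
      using H by (cases v) (auto simp: gm_apply)
  qed
qed

lemma gm_div_eq:
  assumes "A \<subseteq> {0..<n}" "C \<subseteq> {0..<n}" "divides_mon (gm n C) (gm n A)"
  shows "C = A"
proof -
  have "\<forall>i<n. (i\<in>C \<longrightarrow> gm n A (i,0) \<ge> 1) \<and> (i\<notin>C \<longrightarrow> gm n A (i,1) \<ge> 1)"
    using assms(3) div_gm by blast
  then have "\<forall>i<n. (i\<in>C \<longleftrightarrow> i \<in> A)" by (auto simp: gm_apply split: if_splits)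
  with assms(1,2) show ?thesis by auto
qed

lemma Istar_eq: "Istar_gens n (Cfam P) = gm n ` P"
  unfolding Istar_gens_def Cfam_def by (simp add: image_image)

lemma mg:
  assumes "P \<subseteq> Pow {0..<n}"
  shows "min_gens (Istar_gens n (Cfam P)) = gm n ` P"
  unfolding Istar_eq min_gens_def using gm_div_eq assms by blast

lemma fin_mg:
  assumes "P \<subseteq> Pow {0..<n}"
  shows "finite (min_gens (Istar_gens n (Cfam P)))"
proof -
  have "finite P" using assms finite_subset by blast
  then show ?thesis using mg[OF assms] by simp
qed

lemma div_dec1:
  assumes "u v = 1"
  shows "divides_mon g (u(v:=u v - 1)) \<longleftrightarrow> divides_mon g u \<and> g v = 0"
proof
  assume d: "divides_mon g (u(v:=u v - 1))"
  have "g w \<le> u w" for w using d assms unfolding divides_mon_def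
    by (cases "w = v") (metis diff_le_self fun_upd_apply le_trans)+
  moreover have "g v = 0" using d assms unfolding divides_mon_def
    by (metis diff_self_eq_0 fun_upd_same le_zero_eq)
  ultimately show "divides_mon g u \<and> g v = 0" unfolding divides_mon_def by blast
next
  assume d: "divides_mon g u \<and> g v = 0"
  show "divides_mon g (u(v:=u v - 1))" unfolding divides_mon_def
  proof
    fix w show "g w \<le> (u(v:=u v - 1)) w"
      using d unfolding divides_mon_def by (cases "w = v") auto
  qed
qed

lemma rel_gm:
  assumes le1: "\<forall>v. u v \<le> 1" and mon: "is_monomial n u"
    and dA: "divides_mon (gm n A) u" and dC: "divides_mon (gm n C) u"
  shows "Rel u (gm n A) (gm n C) \<longleftrightarrow> (\<exists>i<n. (u(i,0)=1 \<and> i\<notin>A \<and> i\<notin>C) \<or> (u(i,1)=1 \<and> i\<in>A \<and> i\<in>C))"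
proof
  assume "Rel u (gm n A) (gm n C)"
  then obtain v where v: "u v > 0" "divides_mon (gm n A) (u(v:=u v - 1))" "divides_mon (gm n C) (u(v:=u v - 1))"
    unfolding Rel_def by blast
  have u1: "u v = 1" using v(1) le1[rule_format, of v] by linarith
  obtain i b where ib: "v = (i,b)" by (cases v)
  have "v \<in> vars n"
  proof (rule ccontr)
    assume "v \<notin> vars n"
    then have "u v = 0" using mon unfolding is_monomial_def by blast
    with v(1) show False by simp
  qed
  then have ib2: "i < n" "b < 2" using ib by (auto simp: vars_def)
  have z: "gm n A v = 0" "gm n C v = 0" using v div_dec1[of u v, OF u1] by auto
  show "\<exists>i<n. (u(i,0)=1 \<and> i\<notin>A \<and> i\<notin>C) \<or> (u(i,1)=1 \<and> i\<in>A \<and> i\<in>C)"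
  proof (cases "b = 0")
    case True
    have "gm n A (i,0) = 0" "gm n C (i,0) = 0" using z ib True by simp_all
    then have "i \<notin> A" "i \<notin> C" using ib2(1) by (simp_all add: gm_apply split: if_splits)
    moreover have "u (i,0) = 1" using u1 ib True by simp
    ultimately show ?thesis using ib2(1) by blast
  next
    case False
    then have b1: "b = 1" using ib2 by simp
    have "gm n A (i,1) = 0" "gm n C (i,1) = 0" using z ib b1 by simp_all
    then have "i \<in> A" "i \<in> C" using ib2(1) by (simp_all add: gm_apply split: if_splits)
    moreover have "u (i,1) = 1" using u1 ib b1 by simp
    ultimately show ?thesis using ib2(1) by blast
  qed
next
  assume "\<exists>i<n. (u(i,0)=1 \<and> i\<notin>A \<and> i\<notin>C) \<or> (u(i,1)=1 \<and> i\<in>A \<and> i\<in>C)"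
  then obtain i where i: "i < n" "(u(i,0)=1 \<and> i\<notin>A \<and> i\<notin>C) \<or> (u(i,1)=1 \<and> i\<in>A \<and> i\<in>C)" by blast
  from i(2) show "Rel u (gm n A) (gm n C)"
  proof
    assume h: "u(i,0)=1 \<and> i\<notin>A \<and> i\<notin>C"
    have "gm n A (i,0) = 0" "gm n C (i,0) = 0" using h by (simp_all add: gm_apply)
    then have "divides_mon (gm n A) (u((i,0):=u (i,0) - 1))" "divides_mon (gm n C) (u((i,0):=u (i,0) - 1))"
      using div_dec1[of u "(i,0)"] h dA dC by simp_all
    moreover have "u (i,0) > 0" using h by simp
    ultimately show ?thesis unfolding Rel_def by blast
  next
    assume h: "u(i,1)=1 \<and> i\<in>A \<and> i\<in>C"
    have "gm n A (i,1) = 0" "gm n C (i,1) = 0" using h by (simp_all add: gm_apply)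
    then have "divides_mon (gm n A) (u((i,1):=u (i,1) - 1))" "divides_mon (gm n C) (u((i,1):=u (i,1) - 1))"
      using div_dec1[of u "(i,1)"] h dA dC by simp_all
    moreover have "u (i,1) > 0" using h by simp
    ultimately show ?thesis unfolding Rel_def by blast
  qed
qed

lemma rel_big:
  assumes "u v \<ge> 2" "divides_mon g u" "divides_mon h u" "g v \<le> 1" "h v \<le> 1"
  shows "Rel u g h"
  unfolding Rel_def using assms
  by (intro exI[of _ v]) (auto simp: divides_mon_def)

lemma mAB_mon: "is_monomial n (mAB n A B)"
  unfolding is_monomial_def vars_def mAB_def by auto

lemma mAB_le1: "mAB n A B v \<le> 1"
  by (cases v) (simp add: mAB_apply)

lemma div_refl: "divides_mon g g" unfolding divides_mon_def by simp

lemma pos_case: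
  assumes Pn: "P \<subseteq> Pow {0..<n}" and AP: "A \<in> P" and BP: "B \<in> P" and cov: "covers P A B"
  shows "betti1 TYPE('k::field) (Istar_gens n (Cfam P)) (mAB n A B) = 1"
proof -
  let ?u = "mAB n A B"
  have AB: "A \<subset> B" "A \<subseteq> {0..<n}" "B \<subseteq> {0..<n}" using cov AP BP Pn unfolding covers_def by auto
  have dg: "divides_mon (gm n C) ?u \<longleftrightarrow> A \<subseteq> C \<and> C \<subseteq> B" if C: "C \<subseteq> {0..<n}" for C
  proof
    assume "divides_mon (gm n C) ?u"
    then have d: "\<forall>i<n. (i\<in>C \<longrightarrow> ?u(i,0) \<ge> 1) \<and> (i\<notin>C \<longrightarrow> ?u(i,1) \<ge> 1)" using div_gm by blast
    show "A \<subseteq> C \<and> C \<subseteq> B"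
    proof
      show "A \<subseteq> C"
      proof
        fix i assume "i \<in> A"
        with AB have "i < n" by auto
        show "i \<in> C" using d \<open>i<n\<close> \<open>i\<in>A\<close> by (auto simp: mAB_apply split: if_splits)
      qed
      show "C \<subseteq> B"
      proof
        fix i assume "i \<in> C"
        with C have "i < n" by auto
        show "i \<in> B" using d \<open>i<n\<close> \<open>i\<in>C\<close> AB(1) by (auto simp: mAB_apply split: if_splits)
      qed
    qed
  next
    assume h: "A \<subseteq> C \<and> C \<subseteq> B"
    show "divides_mon (gm n C) ?u" unfolding div_gm
      using h by (auto simp: mAB_apply)
  qed
  have Gu: "{g\<in>min_gens (Istar_gens n (Cfam P)). divides_mon g ?u} = {gm n A, gm n B}"
  proof -
    have "C \<in> P \<Longrightarrow> A \<subseteq> C \<Longrightarrow> C \<subseteq> B \<Longrightarrow> C = A \<or> C = B" for C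
      using cov unfolding covers_def by blast
    note cv = this
    have An: "A \<subseteq> {0..<n}" "B \<subseteq> {0..<n}" using AB by auto
    show ?thesis unfolding mg[OF Pn]
    proof (intro equalityI subsetI)
      fix g assume "g \<in> {g \<in> gm n ` P. divides_mon g ?u}"
      then obtain C where C: "C \<in> P" "g = gm n C" "divides_mon (gm n C) ?u" by blast
      have "C \<subseteq> {0..<n}" using C(1) Pn by blast
      then have "A \<subseteq> C" "C \<subseteq> B" using dg C(3) by blast+
      then have "C = A \<or> C = B" using cv C(1) by blast
      then show "g \<in> {gm n A, gm n B}" using C(2) by blast
    next
      fix g assume "g \<in> {gm n A, gm n B}"
      moreover have "divides_mon (gm n A) ?u" "divides_mon (gm n B) ?u"
        using dg[OF An(1)] dg[OF An(2)] AB(1) by blast+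
      ultimately show "g \<in> {g \<in> gm n ` P. divides_mon g ?u}" using AP BP by blast
    qed
  qed
  have ne: "gm n A \<noteq> gm n B"
  proof
    assume "gm n A = gm n B"
    then have "A = B" using gm_div_eq[OF AB(3) AB(2)] div_refl by metis
    with AB show False by simp
  qed
  have nR: "\<not> Rel ?u (gm n A) (gm n B)"
  proof -
    have le1: "\<forall>v. ?u v \<le> 1" using mAB_le1 by blast
    have d1: "divides_mon (gm n A) ?u" "divides_mon (gm n B) ?u"
      using dg[of A] dg[of B] AB by blast+
    have "\<not> (\<exists>i<n. (?u(i,0)=1 \<and> i\<notin>A \<and> i\<notin>B) \<or> (?u(i,1)=1 \<and> i\<in>A \<and> i\<in>B))"
    proof
      assume "\<exists>i<n. (?u(i,0)=1 \<and> i\<notin>A \<and> i\<notin>B) \<or> (?u(i,1)=1 \<and> i\<in>A \<and> i\<in>B)"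
      then obtain i where "(?u(i,0)=1 \<and> i\<notin>A \<and> i\<notin>B) \<or> (?u(i,1)=1 \<and> i\<in>A \<and> i\<in>B)" by blast
      then show False by (simp add: mAB_apply split: if_splits)
    qed
    then show ?thesis using rel_gm[OF le1 mAB_mon d1] by blast
  qed
  show ?thesis by (rule betti_one[OF fin_mg[OF Pn] Gu ne nR])
qed

lemma u_eq:
  assumes le1: "\<forall>v. u v \<le> 1" and mon: "is_monomial n u"
    and sub: "{i. i<n \<and> u(i,1) = 0} \<subseteq> {i. i<n \<and> u(i,0) \<noteq> 0}"
  shows "u = mAB n {i. i<n \<and> u(i,1) = 0} {i. i<n \<and> u(i,0) \<noteq> 0}"
proof
  fix v :: "nat \<times> nat"
  obtain i b where v: "v = (i,b)" by (cases v)
  show "u v = mAB n {i. i<n \<and> u(i,1) = 0} {i. i<n \<and> u(i,0) \<noteq> 0} v"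
  proof (cases "i < n \<and> b < 2")
    case True
    then consider "b = 0" | "b = 1" by linarith
    then show ?thesis
    proof cases
      case 1
      have "u (i,0) \<le> 1" using le1 by blast
      moreover have "u(i,1) = 0 \<Longrightarrow> u(i,0) \<noteq> 0" using sub True by blast
      ultimately show ?thesis using v 1 True by (auto simp: mAB_apply)
    next
      case 2
      have "u (i,1) \<le> 1" using le1 by blast
      then show ?thesis using v 2 True by (auto simp: mAB_apply)
    qed
  next
    case False
    then have "v \<notin> vars n" using v by (auto simp: vars_def)
    then have "u v = 0" using mon unfolding is_monomial_def by blast
    then show ?thesis using v False by (auto simp: mAB_apply)
  qed
qed



lemma zero_case:
  assumes Pn: "P \<subseteq> Pow {0..<n}" and ic: "intersection_closed P" and mon: "is_monomial n u"
    and nc: "\<not>(\<exists>A\<in>P. \<exists>B\<in>P. covers P A B \<and> u = mAB n A B)"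
  shows "betti1 TYPE('k::field) (Istar_gens n (Cfam P)) u = 0"
proof -
  let ?G = "Istar_gens n (Cfam P)"
  let ?Gu = "{g\<in>min_gens ?G. divides_mon g u}"
  have GuE: "g \<in> ?Gu \<longleftrightarrow> (\<exists>A\<in>P. g = gm n A \<and> divides_mon (gm n A) u)" for g
    unfolding mg[OF Pn] by blast
  have H: "?Gu = {} \<or> (\<exists>g0\<in>?Gu. \<forall>h\<in>?Gu. h = g0 \<or> Rel u g0 h \<or> (\<exists>h'\<in>?Gu. Rel u g0 h' \<and> Rel u h' h))"
  proof (cases "\<exists>v. u v \<ge> 2")
    case True
    then obtain v where v: "u v \<ge> 2" by blast
    have R: "Rel u g h" if gh: "g\<in>?Gu" "h\<in>?Gu" for g h
    proof -
      obtain A C where "g = gm n A" "h = gm n C" using gh GuE by blast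
      then show ?thesis using rel_big[of u v g h, OF v] gh gm_le1 by simp
    qed
    show ?thesis
    proof (cases "?Gu = {}")
      case False
      then obtain g0 where "g0 \<in> ?Gu" by blast
      then show ?thesis using R by blast
    qed simp
  next
    case False
    have le1: "\<forall>v. u v \<le> 1"
    proof
      fix v have "\<not> u v \<ge> 2" using False by blast
      then show "u v \<le> 1" by linarith
    qed
    define A0 where "A0 = {i. i<n \<and> u(i,1) = 0}"
    define B0 where "B0 = {i. i<n \<and> u(i,0) \<noteq> 0}"
    have A0n: "A0 \<subseteq> {0..<n}" and B0n: "B0 \<subseteq> {0..<n}" unfolding A0_def B0_def by auto
    have dvd: "divides_mon (gm n C) u \<longleftrightarrow> A0 \<subseteq> C \<and> C \<subseteq> B0" if C: "C \<subseteq> {0..<n}" for C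
    proof
      assume "divides_mon (gm n C) u"
      then have d: "\<forall>i<n. (i\<in>C \<longrightarrow> u(i,0) \<ge> 1) \<and> (i\<notin>C \<longrightarrow> u(i,1) \<ge> 1)" using div_gm by blast
      show "A0 \<subseteq> C \<and> C \<subseteq> B0"
      proof
        show "A0 \<subseteq> C" unfolding A0_def using d by force
        show "C \<subseteq> B0" unfolding B0_def using d C by force
      qed
    next
      assume h: "A0 \<subseteq> C \<and> C \<subseteq> B0"
      show "divides_mon (gm n C) u" unfolding div_gm
      proof (intro allI impI conjI)
        fix i assume i: "i < n"
        show "i \<in> C \<Longrightarrow> 1 \<le> u (i, 0)" using h unfolding B0_def by auto
        show "i \<notin> C \<Longrightarrow> 1 \<le> u (i, 1)" using h i unfolding A0_def by force
      qed
    qed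
    have rel: "Rel u (gm n C) (gm n D)"
      if CD: "C\<in>P" "D\<in>P" "A0 \<subseteq> C" "C \<subseteq> B0" "A0\<subseteq>D" "D\<subseteq>B0" and nn: "\<not> B0 \<subseteq> C \<union> D \<or> \<not> C \<inter> D \<subseteq> A0" for C D
    proof -
      have Cn: "C \<subseteq> {0..<n}" "D \<subseteq> {0..<n}" using CD Pn by auto
      have dC: "divides_mon (gm n C) u" "divides_mon (gm n D) u" using dvd Cn CD by auto
      have "\<exists>i<n. (u(i,0)=1 \<and> i\<notin>C \<and> i\<notin>D) \<or> (u(i,1)=1 \<and> i\<in>C \<and> i\<in>D)"
      proof (cases "B0 \<subseteq> C \<union> D")
        case False
        then obtain i where i: "i \<in> B0" "i \<notin> C" "i \<notin> D" by blast
        have "u(i,0) \<le> 1" using le1 by blast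
        then have "u(i,0) = 1" using i(1) unfolding B0_def by auto
        moreover have "i < n" using i(1) B0n by auto
        ultimately show ?thesis using i by blast
      next
        case True
        with nn obtain i where i: "i \<in> C" "i \<in> D" "i \<notin> A0" by blast
        have "u(i,1) \<le> 1" using le1 by blast
        moreover have "i < n" using i Cn by auto
        ultimately have "u(i,1) = 1" using i(3) unfolding A0_def by auto
        then show ?thesis using i \<open>i<n\<close> by blast
      qed
      then show ?thesis using rel_gm[OF le1 mon dC] by blast
    qed
    have GuE2: "g \<in> ?Gu \<longleftrightarrow> (\<exists>C\<in>P. g = gm n C \<and> A0 \<subseteq> C \<and> C \<subseteq> B0)" for g
    proof -
      have X: "divides_mon (gm n A) u \<longleftrightarrow> A0 \<subseteq> A \<and> A \<subseteq> B0" if "A \<in> P" for A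
        using dvd[of A] Pn that by blast
      show ?thesis unfolding GuE
      proof
        assume "\<exists>A\<in>P. g = gm n A \<and> divides_mon (gm n A) u"
        then obtain A where "A \<in> P" "g = gm n A" "divides_mon (gm n A) u" by blast
        then show "\<exists>C\<in>P. g = gm n C \<and> A0 \<subseteq> C \<and> C \<subseteq> B0" using X by blast
      next
        assume "\<exists>C\<in>P. g = gm n C \<and> A0 \<subseteq> C \<and> C \<subseteq> B0"
        then obtain A where "A \<in> P" "g = gm n A" "A0 \<subseteq> A \<and> A \<subseteq> B0" by blast
        then show "\<exists>A\<in>P. g = gm n A \<and> divides_mon (gm n A) u" using X by blast
      qed
    qed
    show ?thesis
    proof (cases "A0 \<in> P \<and> A0 \<subseteq> B0")
      case True
      have g0: "gm n A0 \<in> ?Gu" using GuE2 True by blast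
      have "\<forall>h\<in>?Gu. h = gm n A0 \<or> Rel u (gm n A0) h \<or> (\<exists>h'\<in>?Gu. Rel u (gm n A0) h' \<and> Rel u h' h)"
      proof
        fix h assume "h \<in> ?Gu"
        then obtain D where D: "D \<in> P" "h = gm n D" "A0 \<subseteq> D" "D \<subseteq> B0" using GuE2 by blast
        show "h = gm n A0 \<or> Rel u (gm n A0) h \<or> (\<exists>h'\<in>?Gu. Rel u (gm n A0) h' \<and> Rel u h' h)"
        proof (cases "D = A0")
          case True then show ?thesis using D by simp
        next
          case DA: False
          show ?thesis
          proof (cases "D = B0")
            case False
            then have "\<not> B0 \<subseteq> A0 \<union> D" using D by blast
            then have "Rel u (gm n A0) (gm n D)" using rel[of A0 D] True D by blast
            then show ?thesis using D by simp
          next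
            case DB: True
            have "u = mAB n A0 B0" unfolding A0_def B0_def
              by (rule u_eq[OF le1 mon]) (use True in \<open>simp add: A0_def B0_def\<close>)
            then have "\<not> covers P A0 B0" using nc True D DB by blast
            moreover have "A0 \<subset> B0" using D DA DB by blast
            ultimately obtain C where C: "C \<in> P" "A0 \<subset> C" "C \<subset> B0" unfolding covers_def by blast
            have hC: "gm n C \<in> ?Gu" using GuE2 C by blast
            have "\<not> B0 \<subseteq> A0 \<union> C" using C by blast
            then have r1: "Rel u (gm n A0) (gm n C)" using rel[of A0 C] True C by blast
            have "\<not> C \<inter> D \<subseteq> A0" using C DB by blast
            then have r2: "Rel u (gm n C) (gm n D)" using rel[of C D] True C D by blast
            show ?thesis using hC r1 r2 D by blast
          qed
        qed
      qed
      then show ?thesis using g0 by blast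
    next
      case False
      show ?thesis
      proof (cases "?Gu = {}")
        case ne: False
        then obtain g0 where "g0 \<in> ?Gu" by blast
        then obtain C where C: "C \<in> P" "g0 = gm n C" "A0 \<subseteq> C" "C \<subseteq> B0" using GuE2 by blast
        then have "A0 \<notin> P" using False by blast
        have "Rel u g0 h" if "h \<in> ?Gu" for h
        proof -
          obtain D where D: "D \<in> P" "h = gm n D" "A0 \<subseteq> D" "D \<subseteq> B0" using GuE2 \<open>h \<in> ?Gu\<close> by blast
          have "C \<inter> D \<in> P" using ic C D unfolding intersection_closed_def by blast
          then have "C \<inter> D \<noteq> A0" using \<open>A0 \<notin> P\<close> by blast
          then have "\<not> C \<inter> D \<subseteq> A0" using C D by blast
          then show ?thesis using rel[of C D] C D by blast
        qed
        then show ?thesis using \<open>g0 \<in> ?Gu\<close> by blast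
      qed simp
    qed
  qed
  show ?thesis by (rule betti_zero[OF hub[OF fin_mg[OF Pn] H]])
qed

lemma mAB_inj:
  assumes "A \<subseteq> B" "B \<subseteq> {0..<n}" "A' \<subseteq> B'" "B' \<subseteq> {0..<n}" "mAB n A B = mAB n A' B'"
  shows "A = A' \<and> B = B'"
proof -
  have e: "mAB n A B (i,b) = mAB n A' B' (i,b)" for i b using assms(5) by simp
  have "i \<in> A \<longleftrightarrow> i \<in> A'" for i
    using e[of i 1] assms(1-4) by (cases "i < n") (auto simp: mAB_apply split: if_splits)
  moreover have "i \<in> B \<longleftrightarrow> i \<in> B'" for i
    using e[of i 0] assms(1-4) by (cases "i < n") (auto simp: mAB_apply split: if_splits)
  ultimately show ?thesis by blast
qed

theorem mainTheorem5:
  fixes n :: nat and P :: "nat set set"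
  assumes "P \<subseteq> Pow {0..<n}" and "P \<noteq> {}" and "intersection_closed P"
  shows "(\<forall>m. is_monomial n m \<longrightarrow>
            ((betti1 TYPE('k::field) (Istar_gens n (Cfam P)) m \<noteq> 0 \<longleftrightarrow>
                (\<exists>A\<in>P. \<exists>B\<in>P. covers P A B \<and> m = mAB n A B))
             \<and> (betti1 TYPE('k) (Istar_gens n (Cfam P)) m \<noteq> 0 \<longrightarrow>
                betti1 TYPE('k) (Istar_gens n (Cfam P)) m = 1)))
         \<and> bij_betw (\<lambda>(A, B). mAB n A B)
             {(A, B). A \<in> P \<and> B \<in> P \<and> covers P A B}
             {m. is_monomial n m \<and> betti1 TYPE('k) (Istar_gens n (Cfam P)) m \<noteq> 0}"
proof -
  let ?b = "betti1 TYPE('k::field) (Istar_gens n (Cfam P))"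
  have part1: "(?b m \<noteq> 0 \<longleftrightarrow> (\<exists>A\<in>P. \<exists>B\<in>P. covers P A B \<and> m = mAB n A B)) \<and> (?b m \<noteq> 0 \<longrightarrow> ?b m = 1)"
    if mon: "is_monomial n m" for m
  proof (cases "\<exists>A\<in>P. \<exists>B\<in>P. covers P A B \<and> m = mAB n A B")
    case True
    then obtain A B where "A \<in> P" "B \<in> P" "covers P A B" "m = mAB n A B" by blast
    then have "?b m = 1" using pos_case[OF assms(1)] by blast
    then show ?thesis using True by simp
  next
    case False
    then have "?b m = 0" using zero_case[OF assms(1) assms(3) mon] by blast
    then show ?thesis using False by simp
  qed
  have inj: "inj_on (\<lambda>(A, B). mAB n A B) {(A, B). A \<in> P \<and> B \<in> P \<and> covers P A B}"
  proof (rule inj_onI)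
    fix x y assume x: "x \<in> {(A, B). A \<in> P \<and> B \<in> P \<and> covers P A B}" and y: "y \<in> {(A, B). A \<in> P \<and> B \<in> P \<and> covers P A B}"
      and e: "(\<lambda>(A, B). mAB n A B) x = (\<lambda>(A, B). mAB n A B) y"
    obtain A B where xe: "x = (A,B)" by (cases x)
    obtain A' B' where ye: "y = (A',B')" by (cases y)
    have "A \<subseteq> B" "B \<subseteq> {0..<n}" "A' \<subseteq> B'" "B' \<subseteq> {0..<n}"
      using x y xe ye assms(1) unfolding covers_def by auto
    then show "x = y" using mAB_inj e xe ye by simp
  qed
  have img: "(\<lambda>(A, B). mAB n A B) ` {(A, B). A \<in> P \<and> B \<in> P \<and> covers P A B} =
      {m. is_monomial n m \<and> ?b m \<noteq> 0}"
  proof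
    show "(\<lambda>(A, B). mAB n A B) ` {(A, B). A \<in> P \<and> B \<in> P \<and> covers P A B} \<subseteq> {m. is_monomial n m \<and> ?b m \<noteq> 0}"
      using part1 mAB_mon by fastforce
    show "{m. is_monomial n m \<and> ?b m \<noteq> 0} \<subseteq> (\<lambda>(A, B). mAB n A B) ` {(A, B). A \<in> P \<and> B \<in> P \<and> covers P A B}"
      using part1 by fastforce
  qed
  show ?thesis using part1 inj img unfolding bij_betw_def by blast
qed

end
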